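(* For a finite set $R$ of pairs $(r,s)$ of extended regular expressions (read as inequalities $r\mathrel{\dot\sqsubseteq}s$), define \[F(R)=R\cup\{(\nabla_A(r),\Delta_A(s))\mid (r,s)\in R,\ A\in\mathrm{next}(r)\ltimes\mathrm{next}(s),\ A\neq\emptyset\}.\] Then for all extended regular expressions $r,s$, the set $\bigcup_{i\in\mathbb N}F^{(i)}(\{(r,s)\})$ contains only finitely many pairs up to componentwise similarity.
   Context: $\Sigma$ is a countable (possibly infinite) alphabet. Literals are sets of symbols drawn from a fixed family $U\subseteq\mathcal P(\Sigma)$ containing $\emptyset$, $\Sigma$ and all singletons and closed under union, intersection and complement $\overline{A}=\Sigma\setminus A$. Extended regular expressions (EREs) are generated by $r,s ::= \epsilon \mid A \mid r+s \mid r\cdot s \mid r^* \mid r\,\&\,s \mid \neg r$ with $A$ a literal; the empty literal is written $\emptyset$. Similarity is the smallest congruence on EREs containing $r+s\sim s+r$, $(r+s)+t\sim r+(s+t)$, $r+r\sim r$ and $r+\emptyset\sim r$. Nullability: $\nu(\epsilon)=\nu(r^* )=\mathit{true}$, $\nu(A)=\mathit{false}$, $\nu(r+s)=\nu(r)\vee\nu(s)$, $\nu(r\cdot s)=\nu(r\&s)=\nu(r)\wedge\nu(s)$, $\nu(\neg r)=\neg\nu(r)$. Positive and negative derivatives with respect to a nonempty literal $B$, by simultaneous recursion: $\Delta_B(\epsilon)=\nabla_B(\epsilon)=\emptyset$; $\Delta_B(A)=\epsilon$ if $A\cap B\neq\emptyset$, else $\emptyset$; $\nabla_B(A)=\epsilon$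 if $B\subseteq A$, else $\emptyset$; for $\square\in\{\Delta,\nabla\}$: $\square_B(r+s)=\square_B(r)+\square_B(s)$, $\square_B(r\cdot s)=\square_B(r)\cdot s+\square_B(s)$ if $\nu(r)$ and $\square_B(r)\cdot s$ otherwise, $\square_B(r^* )=\square_B(r)\cdot r^*$, $\square_B(r\&s)=\square_B(r)\&\square_B(s)$; $\Delta_B(\neg r)=\neg\nabla_B(r)$, $\nabla_B(\neg r)=\neg\Delta_B(r)$. Join: $\mathfrak L_1\Join\mathfrak L_2=\{A_1\cap A_2,\ A_1\cap\overline{\bigcup\mathfrak L_2},\ \overline{\bigcup\mathfrak L_1}\cap A_2 \mid A_1\in\mathfrak L_1, A_2\in\mathfrak L_2\}$; left join $\mathfrak L_1\ltimes\mathfrak L_2=\{A_1\cap A_2,\ A_1\cap\overline{\bigcup\mathfrak L_2}\mid A_1\in\mathfrak L_1, A_2\in\mathfrak L_2\}$; $\mathfrak L_1\sqcap\mathfrak L_2=\{A_1\cap A_2\mid A_1\in\mathfrak L_1,A_2\in\mathfrak L_2\}$. Next literals: $\mathrm{next}(\epsilon)=\{\emptyset\}$; $\mathrm{next}(A)=\{A\}$; $\mathrm{next}(r+s)=\mathrm{next}(r)\Join\mathrm{next}(s)$; $\mathrm{next}(r\cdot s)=\mathrm{next}(r)\Join\mathrm{next}(s)$ if $\nu(r)$ and $\mathrm{next}(r)$ otherwise; $\mathrm{next}(r^* )=\mathrm{next}(r)$; $\mathrm{next}(r\&s)=\mathrm{next}(r)\sqcap\mathrm{next}(s)$; $\mathrm{next}(\neg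 r)=\mathrm{next}(r)\cup\{\bigcap_{A\in\mathrm{next}(r)}\overline{A}\}$. *)

theory Defs
  imports "HOL-Library.Countable"
begin

datatype 'a ere = Eps | Lit "'a set" | Plus "'a ere" "'a ere" | Times "'a ere" "'a ere"
  | Star "'a ere" | Inter "'a ere" "'a ere" | Neg "'a ere"

fun lits :: "'a ere \<Rightarrow> 'a set set" where
  "lits Eps = {}"
| "lits (Lit A) = {A}"
| "lits (Plus r s) = lits r \<union> lits s"
| "lits (Times r s) = lits r \<union> lits s"
| "lits (Star r) = lits r"
| "lits (Inter r s) = lits r \<union> lits s"
| "lits (Neg r) = lits r"

definition literal_family :: "'a set set \<Rightarrow> bool" where
  "literal_family U \<longleftrightarrow> {} \<in> U \<and> UNIV \<in> U \<and> (\<forall>a. {a} \<in> U) \<and>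
     (\<forall>A\<in>U. \<forall>B\<in>U. A \<union> B \<in> U \<and> A \<inter> B \<in> U) \<and> (\<forall>A\<in>U. - A \<in> U)"

inductive sim :: "'a ere \<Rightarrow> 'a ere \<Rightarrow> bool" where
  sim_refl: "sim r r"
| sim_sym: "sim r s \<Longrightarrow> sim s r"
| sim_trans: "sim r s \<Longrightarrow> sim s t \<Longrightarrow> sim r t"
| sim_comm: "sim (Plus r s) (Plus s r)"
| sim_assoc: "sim (Plus (Plus r s) t) (Plus r (Plus s t))"
| sim_idem: "sim (Plus r r) r"
| sim_unit: "sim (Plus r (Lit {})) r"
| sim_Plus: "sim r r' \<Longrightarrow> sim s s' \<Longrightarrow> sim (Plus r s) (Plus r' s')"
| sim_Times: "sim r r' \<Longrightarrow> sim s s' \<Longrightarrow> sim (Times r s) (Times r' s')"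
| sim_Inter: "sim r r' \<Longrightarrow> sim s s' \<Longrightarrow> sim (Inter r s) (Inter r' s')"
| sim_Star: "sim r r' \<Longrightarrow> sim (Star r) (Star r')"
| sim_Neg: "sim r r' \<Longrightarrow> sim (Neg r) (Neg r')"

fun nullable :: "'a ere \<Rightarrow> bool" where
  "nullable Eps = True"
| "nullable (Lit A) = False"
| "nullable (Plus r s) = (nullable r \<or> nullable s)"
| "nullable (Times r s) = (nullable r \<and> nullable s)"
| "nullable (Star r) = True"
| "nullable (Inter r s) = (nullable r \<and> nullable s)"
| "nullable (Neg r) = (\<not> nullable r)"

text \<open>pder B r = positive derivative \<Delta>_B(r); nder B r = negative derivative \<nabla>_B(r).\<close>
fun pder :: "'a set \<Rightarrow> 'a ere \<Rightarrow> 'a ere" and nder :: "'a set \<Rightarrow> 'a ere \<Rightarrow> 'a ere" where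
  "pder B Eps = Lit {}"
| "pder B (Lit A) = (if A \<inter> B \<noteq> {} then Eps else Lit {})"
| "pder B (Plus r s) = Plus (pder B r) (pder B s)"
| "pder B (Times r s) = (if nullable r then Plus (Times (pder B r) s) (pder B s)
                         else Times (pder B r) s)"
| "pder B (Star r) = Times (pder B r) (Star r)"
| "pder B (Inter r s) = Inter (pder B r) (pder B s)"
| "pder B (Neg r) = Neg (nder B r)"
| "nder B Eps = Lit {}"
| "nder B (Lit A) = (if B \<subseteq> A then Eps else Lit {})"
| "nder B (Plus r s) = Plus (nder B r) (nder B s)"
| "nder B (Times r s) = (if nullable r then Plus (Times (nder B r) s) (nder B s)
                         else Times (nder B r) s)"
| "nder B (Star r) = Times (nder B r) (Star r)"
| "nder B (Inter r s) = Inter (nder B r) (nder B s)"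
| "nder B (Neg r) = Neg (pder B r)"

definition join :: "'a set set \<Rightarrow> 'a set set \<Rightarrow> 'a set set" where
  "join L1 L2 = {A1 \<inter> A2 | A1 A2. A1 \<in> L1 \<and> A2 \<in> L2}
     \<union> {A1 \<inter> - \<Union>L2 | A1 A2. A1 \<in> L1 \<and> A2 \<in> L2}
     \<union> {- \<Union>L1 \<inter> A2 | A1 A2. A1 \<in> L1 \<and> A2 \<in> L2}"

definition ljoin :: "'a set set \<Rightarrow> 'a set set \<Rightarrow> 'a set set" where
  "ljoin L1 L2 = {A1 \<inter> A2 | A1 A2. A1 \<in> L1 \<and> A2 \<in> L2}
     \<union> {A1 \<inter> - \<Union>L2 | A1 A2. A1 \<in> L1 \<and> A2 \<in> L2}"

definition meet :: "'a set set \<Rightarrow> 'a set set \<Rightarrow> 'a set set" where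
  "meet L1 L2 = {A1 \<inter> A2 | A1 A2. A1 \<in> L1 \<and> A2 \<in> L2}"

fun next_lits :: "'a ere \<Rightarrow> 'a set set" where
  "next_lits Eps = {{}}"
| "next_lits (Lit A) = {A}"
| "next_lits (Plus r s) = join (next_lits r) (next_lits s)"
| "next_lits (Times r s) = (if nullable r then join (next_lits r) (next_lits s) else next_lits r)"
| "next_lits (Star r) = next_lits r"
| "next_lits (Inter r s) = meet (next_lits r) (next_lits s)"
| "next_lits (Neg r) = next_lits r \<union> {\<Inter>A\<in>next_lits r. - A}"

definition F :: "('a ere \<times> 'a ere) set \<Rightarrow> ('a ere \<times> 'a ere) set" where
  "F R = R \<union> {(nder A r, pder A s) | r s A. (r, s) \<in> R \<and>
                 A \<in> ljoin (next_lits r) (next_lits s) \<and> A \<noteq> {}}"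

end

theory Submission
  imports Defs
begin

lemmas sim_trans' [trans] = sim_trans

definition simfin :: "'a ere set \<Rightarrow> bool" where
  "simfin A \<longleftrightarrow> (\<exists>S. finite S \<and> (\<forall>e\<in>A. \<exists>e'\<in>S. sim e e'))"

lemma simfin_mono: "A \<subseteq> B \<Longrightarrow> simfin B \<Longrightarrow> simfin A"
  unfolding simfin_def by blast

lemma simfin_finite: "finite A \<Longrightarrow> simfin A"
  unfolding simfin_def by (blast intro: sim_refl)

lemma simfin_Un: "simfin A \<Longrightarrow> simfin B \<Longrightarrow> simfin (A \<union> B)"
proof -
  assume "simfin A" "simfin B"
  then obtain S1 S2 where "finite S1" "\<forall>e\<in>A. \<exists>e'\<in>S1. sim e e'"
      "finite S2" "\<forall>e\<in>B. \<exists>e'\<in>S2. sim e e'"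
    unfolding simfin_def by blast
  then have "finite (S1 \<union> S2) \<and> (\<forall>e\<in>A \<union> B. \<exists>e'\<in>S1 \<union> S2. sim e e')" by blast
  then show ?thesis unfolding simfin_def by blast
qed

lemma simfin_image:
  assumes "\<And>a b. sim a b \<Longrightarrow> sim (f a) (f b)" "simfin A"
  shows "simfin (f ` A)"
proof -
  from assms(2) obtain S where S: "finite S" "\<forall>e\<in>A. \<exists>e'\<in>S. sim e e'"
    unfolding simfin_def by blast
  show ?thesis unfolding simfin_def
    using S assms(1) by (intro exI[of _ "f ` S"]) blast
qed

lemma simfin_image2:
  assumes "\<And>a a' b b'. sim a a' \<Longrightarrow> sim b b' \<Longrightarrow> sim (f a b) (f a' b')"
    "simfin A" "simfin B"
  shows "simfin {f a b |a b. a \<in> A \<and> b \<in> B}"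
proof -
  from assms(2) obtain S where S: "finite S" "\<forall>e\<in>A. \<exists>e'\<in>S. sim e e'"
    unfolding simfin_def by blast
  from assms(3) obtain S2 where S2: "finite S2" "\<forall>e\<in>B. \<exists>e'\<in>S2. sim e e'"
    unfolding simfin_def by blast
  have "\<forall>e\<in>{f a b |a b. a \<in> A \<and> b \<in> B}. \<exists>e'\<in>(\<lambda>(x,y). f x y) ` (S \<times> S2). sim e e'"
  proof
    fix e assume "e \<in> {f a b |a b. a \<in> A \<and> b \<in> B}"
    then obtain a b where e: "e = f a b" "a \<in> A" "b \<in> B" by blast
    obtain x where x: "x \<in> S" "sim a x" using S(2) e(2) by blast
    obtain y where y: "y \<in> S2" "sim b y" using S2(2) e(3) by blast
    have "f x y \<in> (\<lambda>(x,y). f x y) ` (S \<times> S2)" using x y by (auto intro: image_eqI[of _ _ "(x,y)"])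
    moreover have "sim e (f x y)" using e(1) assms(1)[OF x(2) y(2)] by simp
    ultimately show "\<exists>e'\<in>(\<lambda>(x,y). f x y) ` (S \<times> S2). sim e e'" by blast
  qed
  moreover have "finite ((\<lambda>(x,y). f x y) ` (S \<times> S2))" using S(1) S2(1) by simp
  ultimately show ?thesis unfolding simfin_def by blast
qed

inductive_set sums :: "'a ere set \<Rightarrow> 'a ere set" for X where
  sums_leaf: "x \<in> X \<Longrightarrow> x \<in> sums X"
| sums_plus: "a \<in> sums X \<Longrightarrow> b \<in> sums X \<Longrightarrow> Plus a b \<in> sums X"

inductive isum :: "'a ere set \<Rightarrow> 'a ere \<Rightarrow> bool" where
  isum_leaf: "isum {x} x"
| isum_plus: "isum L1 a \<Longrightarrow> isum L2 b \<Longrightarrow> isum (L1 \<union> L2) (Plus a b)"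

lemma isum_absorb1: "isum M b \<Longrightarrow> x \<in> M \<Longrightarrow> sim (Plus b x) b"
proof (induction rule: isum.induct)
  case (isum_leaf y)
  then have "x = y" by simp
  then show ?case using sim_idem[of y] by simp
next
  case (isum_plus L1 b1 L2 b2)
  show ?case
  proof (cases "x \<in> L1")
    case True
    have IH: "sim (Plus b1 x) b1" using isum_plus.IH(1)[OF True] .
    have "sim (Plus (Plus b1 b2) x) (Plus b1 (Plus b2 x))" by (rule sim_assoc)
    also have "sim \<dots> (Plus b1 (Plus x b2))" by (rule sim_Plus[OF sim_refl sim_comm])
    also have "sim \<dots> (Plus (Plus b1 x) b2)" by (rule sim_sym[OF sim_assoc])
    also have "sim \<dots> (Plus b1 b2)" by (rule sim_Plus[OF IH sim_refl])
    finally show ?thesis .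
  next
    case False
    then have x2: "x \<in> L2" using isum_plus.prems by blast
    have IH: "sim (Plus b2 x) b2" using isum_plus.IH(2)[OF x2] .
    have "sim (Plus (Plus b1 b2) x) (Plus b1 (Plus b2 x))" by (rule sim_assoc)
    also have "sim \<dots> (Plus b1 b2)" by (rule sim_Plus[OF sim_refl IH])
    finally show ?thesis .
  qed
qed

lemma isum_absorb: "isum L a \<Longrightarrow> isum M b \<Longrightarrow> L \<subseteq> M \<Longrightarrow> sim (Plus b a) b"
proof (induction rule: isum.induct)
  case (isum_leaf x)
  then have "x \<in> M" by simp
  then show ?case by (rule isum_absorb1[OF isum_leaf.prems(1)])
next
  case (isum_plus L1 a1 L2 a2)
  have IH1: "sim (Plus b a1) b" using isum_plus.IH(1) isum_plus.prems by blast
  have IH2: "sim (Plus b a2) b" using isum_plus.IH(2) isum_plus.prems by blast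
  have "sim (Plus b (Plus a1 a2)) (Plus (Plus b a1) a2)" by (rule sim_sym[OF sim_assoc])
  also have "sim \<dots> (Plus b a2)" by (rule sim_Plus[OF IH1 sim_refl])
  also have "sim \<dots> b" by (rule IH2)
  finally show ?case .
qed

lemma isum_sim: "isum L a \<Longrightarrow> isum L b \<Longrightarrow> sim a b"
proof -
  assume a: "isum L a" and b: "isum L b"
  have "sim a (Plus a b)" by (rule sim_sym[OF isum_absorb[OF b a order_refl]])
  also have "sim \<dots> (Plus b a)" by (rule sim_comm)
  also have "sim \<dots> b" by (rule isum_absorb[OF a b order_refl])
  finally show ?thesis .
qed

lemma sums_rep: "e \<in> sums X \<Longrightarrow> (\<forall>x\<in>X. \<exists>y\<in>S. sim x y) \<Longrightarrow>
   \<exists>L e'. L \<subseteq> S \<and> isum L e' \<and> sim e e'"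
proof (induction rule: sums.induct)
  case (sums_leaf x)
  then obtain y where "y \<in> S" "sim x y" by blast
  then show ?case using isum_leaf by blast
next
  case (sums_plus a b)
  then obtain L1 a' L2 b' where "L1 \<subseteq> S" "isum L1 a'" "sim a a'" "L2 \<subseteq> S" "isum L2 b'" "sim b b'"
    by blast
  then show ?case by (intro exI[of _ "L1 \<union> L2"] exI[of _ "Plus a' b'"])
      (auto intro: isum_plus sim_Plus)
qed

lemma simfin_sums: "simfin X \<Longrightarrow> simfin (sums X)"
proof -
  assume "simfin X"
  then obtain S where S: "finite S" "\<forall>x\<in>X. \<exists>y\<in>S. sim x y" unfolding simfin_def by blast
  let ?T = "(\<lambda>L. SOME e. isum L e) ` Pow S"
  have "\<forall>e\<in>sums X. \<exists>e'\<in>?T. sim e e'"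
  proof
    fix e assume "e \<in> sums X"
    then obtain L e' where L: "L \<subseteq> S" "isum L e'" "sim e e'" using sums_rep[OF _ S(2)] by blast
    have "isum L (SOME e. isum L e)" using L(2) by (rule someI)
    then have "sim e' (SOME e. isum L e)" by (rule isum_sim[OF L(2)])
    then have "sim e (SOME e. isum L e)" by (rule sim_trans[OF L(3)])
    moreover have "(SOME e. isum L e) \<in> ?T" using L(1) by blast
    ultimately show "\<exists>e'\<in>?T. sim e e'" by blast
  qed
  then show ?thesis unfolding simfin_def using S(1) by blast
qed

inductive_set ders :: "'a ere \<Rightarrow> 'a ere set" for r where
  ders_self: "r \<in> ders r"
| ders_p: "e \<in> ders r \<Longrightarrow> pder B e \<in> ders r"
| ders_n: "e \<in> ders r \<Longrightarrow> nder B e \<in> ders r"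

lemma ders_Eps: "e \<in> ders Eps \<Longrightarrow> e \<in> {Eps, Lit {}}"
  by (induction rule: ders.induct) (auto split: if_splits)

lemma ders_Lit: "e \<in> ders (Lit A) \<Longrightarrow> e \<in> {Lit A, Eps, Lit {}}"
  by (induction rule: ders.induct) (auto split: if_splits)

lemma ders_Plus: "e \<in> ders (Plus r s) \<Longrightarrow> e \<in> {Plus a b |a b. a \<in> ders r \<and> b \<in> ders s}"
  by (induction rule: ders.induct) (auto intro: ders.intros)

lemma ders_Inter: "e \<in> ders (Inter r s) \<Longrightarrow> e \<in> {Inter a b |a b. a \<in> ders r \<and> b \<in> ders s}"
  by (induction rule: ders.induct) (auto intro: ders.intros)

lemma ders_Neg: "e \<in> ders (Neg r) \<Longrightarrow> e \<in> Neg ` ders r"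
  by (induction rule: ders.induct) (auto intro: ders.intros)

lemma sums_Times_der:
  "e \<in> sums ((\<lambda>a. Times a s) ` ders r \<union> ders s) \<Longrightarrow>
    pder B e \<in> sums ((\<lambda>a. Times a s) ` ders r \<union> ders s) \<and>
    nder B e \<in> sums ((\<lambda>a. Times a s) ` ders r \<union> ders s)"
proof (induction rule: sums.induct)
  case (sums_leaf x)
  let ?X = "(\<lambda>a. Times a s) ` ders r \<union> ders s"
  have T: "a \<in> ders r \<Longrightarrow> Times a s \<in> sums ?X" for a by (intro sums.sums_leaf) auto
  have D: "a \<in> ders s \<Longrightarrow> a \<in> sums ?X" for a by (intro sums.sums_leaf) auto
  have s: "pder B s \<in> ders s" "nder B s \<in> ders s" by (auto intro: ders.intros)
  show ?case using sums_leaf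
  proof
    assume "x \<in> (\<lambda>a. Times a s) ` ders r"
    then obtain a where a: "x = Times a s" "a \<in> ders r" by blast
    then have "pder B a \<in> ders r" "nder B a \<in> ders r" by (auto intro: ders.intros)
    then show ?case using a T D s by (auto intro: sums_plus)
  next
    assume "x \<in> ders s"
    then show ?case using D by (auto intro: ders.intros)
  qed
next
  case (sums_plus a b)
  then show ?case by (auto intro: sums.intros)
qed

lemma ders_Times: "e \<in> ders (Times r s) \<Longrightarrow> e \<in> sums ((\<lambda>a. Times a s) ` ders r \<union> ders s)"
  by (induction rule: ders.induct) (auto intro: sums.intros ders.intros sums_Times_der[THEN conjunct1]
      sums_Times_der[THEN conjunct2])

lemma sums_Star_der:
  "e \<in> sums ((\<lambda>a. Times a (Star r)) ` ders r) \<Longrightarrow>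
    pder B e \<in> sums ((\<lambda>a. Times a (Star r)) ` ders r) \<and>
    nder B e \<in> sums ((\<lambda>a. Times a (Star r)) ` ders r)"
proof (induction rule: sums.induct)
  case (sums_leaf x)
  let ?X = "(\<lambda>a. Times a (Star r)) ` ders r"
  have T: "a \<in> ders r \<Longrightarrow> Times a (Star r) \<in> sums ?X" for a by (intro sums.sums_leaf) auto
  obtain a where a: "x = Times a (Star r)" "a \<in> ders r" using sums_leaf by blast
  then have "pder B a \<in> ders r" "nder B a \<in> ders r" "pder B r \<in> ders r" "nder B r \<in> ders r"
    by (auto intro: ders.intros)
  then show ?case using a T by (auto intro: sums_plus)
next
  case (sums_plus a b)
  then show ?case by (auto intro: sums.intros)
qed

lemma Star_leaf: "a \<in> ders r \<Longrightarrow> Times a (Star r) \<in> sums ((\<lambda>a. Times a (Star r)) ` ders r)"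
  by (intro sums.sums_leaf) auto

lemma ders_Star: "e \<in> ders (Star r) \<Longrightarrow> e \<in> {Star r} \<union> sums ((\<lambda>a. Times a (Star r)) ` ders r)"
  by (induction rule: ders.induct) (auto intro: Star_leaf[OF ders_p[OF ders_self]] Star_leaf[OF ders_n[OF ders_self]] sums_Star_der[THEN conjunct1]
      sums_Star_der[THEN conjunct2])

lemma simfin_ders: "simfin (ders r)"
proof (induction r)
  case Eps
  have "ders Eps \<subseteq> {Eps, Lit {}}" using ders_Eps by blast
  then show ?case by (rule simfin_mono) (rule simfin_finite, simp)
next
  case (Lit A)
  have "ders (Lit A) \<subseteq> {Lit A, Eps, Lit {}}" using ders_Lit by blast
  then show ?case by (rule simfin_mono) (rule simfin_finite, simp)
next
  case (Plus r s)
  have "simfin {Plus a b |a b. a \<in> ders r \<and> b \<in> ders s}"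
    by (rule simfin_image2[of Plus, OF sim_Plus Plus.IH])
  moreover have "ders (Plus r s) \<subseteq> {Plus a b |a b. a \<in> ders r \<and> b \<in> ders s}"
    using ders_Plus by blast
  ultimately show ?case by (rule simfin_mono[rotated])
next
  case (Times r s)
  have "simfin ((\<lambda>a. Times a s) ` ders r)"
    by (rule simfin_image[OF _ Times.IH(1)]) (rule sim_Times[OF _ sim_refl])
  then have "simfin (sums ((\<lambda>a. Times a s) ` ders r \<union> ders s))"
    by (intro simfin_sums simfin_Un Times.IH(2))
  moreover have "ders (Times r s) \<subseteq> sums ((\<lambda>a. Times a s) ` ders r \<union> ders s)"
    using ders_Times by blast
  ultimately show ?case by (rule simfin_mono[rotated])
next
  case (Star r)
  have "simfin ((\<lambda>a. Times a (Star r)) ` ders r)"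
    by (rule simfin_image[OF _ Star.IH]) (rule sim_Times[OF _ sim_refl])
  then have "simfin ({Star r} \<union> sums ((\<lambda>a. Times a (Star r)) ` ders r))"
    by (intro simfin_sums simfin_Un[OF simfin_finite]) simp
  moreover have "ders (Star r) \<subseteq> {Star r} \<union> sums ((\<lambda>a. Times a (Star r)) ` ders r)"
    using ders_Star by blast
  ultimately show ?case by (rule simfin_mono[rotated])
next
  case (Inter r s)
  have "simfin {Inter a b |a b. a \<in> ders r \<and> b \<in> ders s}"
    by (rule simfin_image2[of Inter, OF sim_Inter Inter.IH])
  moreover have "ders (Inter r s) \<subseteq> {Inter a b |a b. a \<in> ders r \<and> b \<in> ders s}"
    using ders_Inter by blast
  ultimately show ?case by (rule simfin_mono[rotated])
next
  case (Neg r)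
  have "simfin (Neg ` ders r)"
    by (rule simfin_image[of Neg, OF sim_Neg Neg.IH])
  moreover have "ders (Neg r) \<subseteq> Neg ` ders r" using ders_Neg by blast
  ultimately show ?case by (rule simfin_mono[rotated])
qed

lemma F_sub: "R \<subseteq> ders r \<times> ders s \<Longrightarrow> F R \<subseteq> ders r \<times> ders s"
proof
  fix x assume R: "R \<subseteq> ders r \<times> ders s" and x: "x \<in> F R"
  show "x \<in> ders r \<times> ders s"
  proof (cases "x \<in> R")
    case True then show ?thesis using R by blast
  next
    case False
    then obtain p q A where pq: "x = (nder A p, pder A q)" "(p, q) \<in> R"
      using x unfolding F_def by blast
    then have "p \<in> ders r" "q \<in> ders s" using R by blast+
    then have "nder A p \<in> ders r" "pder A q \<in> ders s" by (blast intro: ders_n, blast intro: ders_p)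
    then show ?thesis using pq(1) by simp
  qed
qed

lemma Fpow_sub: "(F ^^ i) {(r, s)} \<subseteq> ders r \<times> ders s"
proof (induction i)
  case 0
  have "r \<in> ders r" "s \<in> ders s" by (rule ders_self)+
  then show ?case by simp
next
  case (Suc i)
  have "F ((F ^^ i) {(r, s)}) \<subseteq> ders r \<times> ders s" by (rule F_sub[OF Suc.IH])
  then show ?case by simp
qed

theorem theorem5:
  fixes U :: "('a::countable) set set" and r s :: "'a ere"
  assumes "literal_family U" and "lits r \<subseteq> U" and "lits s \<subseteq> U"
  shows "\<exists>T. finite T \<and>
    (\<forall>(p, q) \<in> (\<Union>i. (F ^^ i) {(r, s)}). \<exists>(p', q') \<in> T. sim p p' \<and> sim q q')"
proof -
  obtain S1 where S1: "finite S1" "\<forall>e\<in>ders r. \<exists>e'\<in>S1. sim e e'"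
    using simfin_ders[of r] unfolding simfin_def by blast
  obtain S2 where S2: "finite S2" "\<forall>e\<in>ders s. \<exists>e'\<in>S2. sim e e'"
    using simfin_ders[of s] unfolding simfin_def by blast
  have *: "\<exists>(p', q') \<in> S1 \<times> S2. sim p p' \<and> sim q q'"
    if "(p, q) \<in> (\<Union>i. (F ^^ i) {(r, s)})" for p q
  proof -
    from that obtain i where "(p, q) \<in> (F ^^ i) {(r, s)}" by blast
    then have "(p, q) \<in> ders r \<times> ders s" using Fpow_sub by blast
    then have "p \<in> ders r" "q \<in> ders s" by simp_all
    then obtain p' q' where "p' \<in> S1" "sim p p'" "q' \<in> S2" "sim q q'" using S1(2) S2(2) by meson
    then show ?thesis by blast
  qed
  have "finite (S1 \<times> S2)" using S1(1) S2(1) by simp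
  moreover have "\<forall>(p, q) \<in> (\<Union>i. (F ^^ i) {(r, s)}). \<exists>(p', q') \<in> S1 \<times> S2. sim p p' \<and> sim q q'"
    using * by blast
  ultimately show ?thesis by blast
qed

end
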